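(* Let $G=(V,E)$ be a finite graph and $A \subset V$, $A \neq \emptyset$. Then: (i) $\mathbb P_V(A \in \mathrm{Inv}) = Z(A) Z(A^c) / Z(V)$. (ii) For $\mathcal F_A$-measurable $f$, $\mathbb E_V(f \mid A \in \mathrm{Inv}) = \mathbb E_A(f(\cdot \oplus \mathrm{id}))$. (iii) For $\mathcal F_A$-measurable $f$ and $\mathcal F_{A^c}$-measurable $g$, $$\mathbb E_V(f g \mid A \in \mathrm{Inv}) = \mathbb E_V(f \mid A \in \mathrm{Inv})\, \mathbb E_V(g \mid A \in \mathrm{Inv}) = \mathbb E_A(f(\cdot \oplus \mathrm{id}))\, \mathbb E_{A^c}(g(\cdot \oplus \mathrm{id})).$$ (iv) For $\mathcal F_A$-measurable $f$ and $\mathcal B \in \mathcal F_{A^c}$, $\mathbb E_V(f \mid A \in \mathrm{Inv}, \mathcal B) = \mathbb E_A(f)$.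
   Context: For $U\subset V$, $\mathcal S_U$ is the set of bijections $\pi:U\to U$ with $\pi(x)=x$ or $\{x,\pi(x)\}\in E$ for all $x\in U$ (edges within $U$). $\mathcal H_U(\pi)=\sum_{x\in U}\mathbb 1\{\pi(x)\ne x\}$, $Z(U)=\sum_{\pi\in\mathcal S_U}e^{-\alpha\mathcal H_U(\pi)}$ ($Z(\emptyset)=1$), $\mathbb P_U(\pi)=e^{-\alpha\mathcal H_U(\pi)}/Z(U)$, and $\mathbb E_U$ the corresponding expectation. For $B\subset V$, $\mathcal F_B$ is the $\sigma$-algebra on $\mathcal S_V$ generated by the events $\{\pi:\pi(x)=y,\ \pi^{-1}(x)=z\}$, $x\in B$, $y,z\in V$. $\mathrm{Inv}(\pi)=\{A\subset V:\pi(A)=A\}$ and $\{A\in\mathrm{Inv}\}$ is the event $\{\pi:\pi(A)=A\}$. For $\pi\in\mathcal S_A$, $\pi\oplus\mathrm{id}\in\mathcal S_V$ is the extension of $\pi$ by the identity outside $A$; for $f$ on $\mathcal S_V$, $\mathbb E_A(f)$ means $\mathbb E_A(f(\cdot\oplus\mathrm{id}))$. *)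

theory Defs
  imports Complex_Main "HOL-Combinatorics.Permutations"
begin

definition graph :: "'a set \<Rightarrow> ('a \<Rightarrow> 'a \<Rightarrow> bool) \<Rightarrow> bool" where
  "graph V E \<longleftrightarrow> finite V \<and> (\<forall>x y. E x y \<longrightarrow> E y x \<and> x \<noteq> y \<and> x \<in> V \<and> y \<in> V)"

text \<open>S_U: bijections of U moving each point along an edge (represented as
  permutations of U, i.e. extended by the identity outside U).\<close>
definition Sperm :: "('a \<Rightarrow> 'a \<Rightarrow> bool) \<Rightarrow> 'a set \<Rightarrow> ('a \<Rightarrow> 'a) set" where
  "Sperm E U = {\<pi>. \<pi> permutes U \<and> (\<forall>x\<in>U. \<pi> x = x \<or> E x (\<pi> x))}"

definition Ham :: "'a set \<Rightarrow> ('a \<Rightarrow> 'a) \<Rightarrow> nat" where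
  "Ham U \<pi> = card {x\<in>U. \<pi> x \<noteq> x}"

definition Zpart :: "('a \<Rightarrow> 'a \<Rightarrow> bool) \<Rightarrow> real \<Rightarrow> 'a set \<Rightarrow> real" where
  "Zpart E \<alpha> U = (\<Sum>\<pi>\<in>Sperm E U. exp (- \<alpha> * real (Ham U \<pi>)))"

definition Prob :: "('a \<Rightarrow> 'a \<Rightarrow> bool) \<Rightarrow> real \<Rightarrow> 'a set \<Rightarrow> ('a \<Rightarrow> 'a) \<Rightarrow> real" where
  "Prob E \<alpha> U \<pi> = exp (- \<alpha> * real (Ham U \<pi>)) / Zpart E \<alpha> U"

text \<open>Expectation under P_U of a function on permutations; since elements of S_U are
  already extended by the identity, this is E_U(f(. \<oplus> id)).\<close>
definition Expect :: "('a \<Rightarrow> 'a \<Rightarrow> bool) \<Rightarrow> real \<Rightarrow> 'a set \<Rightarrow> (('a \<Rightarrow> 'a) \<Rightarrow> real) \<Rightarrow> real" where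
  "Expect E \<alpha> U f = (\<Sum>\<pi>\<in>Sperm E U. f \<pi> * Prob E \<alpha> U \<pi>)"

definition ProbEv :: "('a \<Rightarrow> 'a \<Rightarrow> bool) \<Rightarrow> real \<Rightarrow> 'a set \<Rightarrow> ('a \<Rightarrow> 'a) set \<Rightarrow> real" where
  "ProbEv E \<alpha> U C = Expect E \<alpha> U (\<lambda>\<pi>. of_bool (\<pi> \<in> C))"

definition CondExpect :: "('a \<Rightarrow> 'a \<Rightarrow> bool) \<Rightarrow> real \<Rightarrow> 'a set \<Rightarrow> (('a \<Rightarrow> 'a) \<Rightarrow> real)
    \<Rightarrow> ('a \<Rightarrow> 'a) set \<Rightarrow> real" where
  "CondExpect E \<alpha> U f C = Expect E \<alpha> U (\<lambda>\<pi>. f \<pi> * of_bool (\<pi> \<in> C)) / ProbEv E \<alpha> U C"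

text \<open>f on S_V is F_B-measurable iff it is constant on the atoms of F_B, i.e. it only
  depends on (\<pi>(x), \<pi>^{-1}(x)) for x in B.\<close>
definition Fmeas :: "('a \<Rightarrow> 'a \<Rightarrow> bool) \<Rightarrow> 'a set \<Rightarrow> 'a set \<Rightarrow> (('a \<Rightarrow> 'a) \<Rightarrow> 'b) \<Rightarrow> bool" where
  "Fmeas E V B f \<longleftrightarrow> (\<forall>\<pi>\<in>Sperm E V. \<forall>\<sigma>\<in>Sperm E V.
      (\<forall>x\<in>B. \<pi> x = \<sigma> x \<and> inv \<pi> x = inv \<sigma> x) \<longrightarrow> f \<pi> = f \<sigma>)"

definition Fevent :: "('a \<Rightarrow> 'a \<Rightarrow> bool) \<Rightarrow> 'a set \<Rightarrow> 'a set \<Rightarrow> ('a \<Rightarrow> 'a) set \<Rightarrow> bool" where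
  "Fevent E V B C \<longleftrightarrow> C \<subseteq> Sperm E V \<and> Fmeas E V B (\<lambda>\<pi>. \<pi> \<in> C)"

definition InvEv :: "('a \<Rightarrow> 'a \<Rightarrow> bool) \<Rightarrow> 'a set \<Rightarrow> 'a set \<Rightarrow> ('a \<Rightarrow> 'a) set" where
  "InvEv E V A = {\<pi>\<in>Sperm E V. \<pi> ` A = A}"

end

theory Submission
  imports Defs
begin

lemma fin_Sperm: "finite U \<Longrightarrow> finite (Sperm E U)"
  by (rule finite_subset[OF _ finite_permutations[of U]]) (auto simp: Sperm_def)

lemma id_Sperm: "id \<in> Sperm E U"
  by (auto simp: Sperm_def permutes_id)

lemma Zpos: "finite U \<Longrightarrow> Zpart E \<alpha> U > 0"
  unfolding Zpart_def
  apply (rule sum_pos) using id_Sperm[of E U] by (auto simp: fin_Sperm)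

lemma Sperm_mono: "U \<subseteq> W \<Longrightarrow> Sperm E U \<subseteq> Sperm E W"
  by (auto simp: Sperm_def permutes_subset permutes_not_in)

definition rA :: "'a set \<Rightarrow> ('a \<Rightarrow> 'a) \<Rightarrow> 'a \<Rightarrow> 'a" where
  "rA A \<pi> = (\<lambda>x. if x \<in> A then \<pi> x else x)"
definition rB :: "'a set \<Rightarrow> ('a \<Rightarrow> 'a) \<Rightarrow> 'a \<Rightarrow> 'a" where
  "rB A \<pi> = (\<lambda>x. if x \<in> A then x else \<pi> x)"

context
  fixes V A :: "'a set" and E :: "'a \<Rightarrow> 'a \<Rightarrow> bool"
  assumes G: "graph V E" and AV: "A \<subseteq> V"
begin

lemma finV: "finite V" using G by (simp add: graph_def)

lemma tau_out:
  assumes "\<tau> \<in> Sperm E (V - A)" "x \<notin> A"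
  shows "\<tau> x \<notin> A"
proof (cases "x \<in> V")
  case True
  have tp: "\<tau> permutes (V - A)" using assms by (simp add: Sperm_def)
  have "\<tau> x \<in> V - A" using True assms(2) permutes_in_image[OF tp, of x] by simp
  then show ?thesis by simp
next
  case False
  then have "\<tau> x = x" using assms by (auto simp: Sperm_def permutes_not_in)
  then show ?thesis using assms by simp
qed

lemma tau_fixA:
  assumes "\<tau> \<in> Sperm E (V - A)" "x \<in> A"
  shows "\<tau> x = x"
  using assms by (auto simp: Sperm_def permutes_not_in)

lemma sigma_fix:
  assumes "\<sigma> \<in> Sperm E A" "x \<notin> A"
  shows "\<sigma> x = x"
  using assms by (auto simp: Sperm_def permutes_not_in)

lemma comp_in:
  assumes s: "\<sigma> \<in> Sperm E A" and t: "\<tau> \<in> Sperm E (V - A)"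
  shows "\<sigma> \<circ> \<tau> \<in> InvEv E V A"
proof -
  have sV: "\<sigma> \<in> Sperm E V" using Sperm_mono[OF AV] s by blast
  have tV: "\<tau> \<in> Sperm E V" using Sperm_mono[of "V - A" V] t by blast
  have p: "\<sigma> \<circ> \<tau> permutes V" using sV tV by (auto simp: Sperm_def intro: permutes_compose)
  have e: "\<forall>x\<in>V. (\<sigma> \<circ> \<tau>) x = x \<or> E x ((\<sigma> \<circ> \<tau>) x)"
  proof
    fix x assume "x \<in> V"
    show "(\<sigma> \<circ> \<tau>) x = x \<or> E x ((\<sigma> \<circ> \<tau>) x)"
    proof (cases "x \<in> A")
      case True
      then show ?thesis using tau_fixA[OF t True] s by (auto simp: Sperm_def)
    next
      case False
      then have "\<sigma> (\<tau> x) = \<tau> x" using sigma_fix[OF s tau_out[OF t False]] by simp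
      then show ?thesis using t \<open>x \<in> V\<close> False by (auto simp: Sperm_def)
    qed
  qed
  have "\<tau> ` A = A" using tau_fixA[OF t] by force
  moreover have "\<sigma> ` A = A" using s by (auto simp: Sperm_def permutes_image)
  moreover have "(\<sigma> \<circ> \<tau>) ` A = \<sigma> ` (\<tau> ` A)" by (simp add: image_comp)
  ultimately have "(\<sigma> \<circ> \<tau>) ` A = A" by simp
  then show ?thesis using p e by (auto simp: InvEv_def Sperm_def)
qed

lemma restr_in:
  assumes "\<pi> \<in> InvEv E V A"
  shows "rA A \<pi> \<in> Sperm E A" "rB A \<pi> \<in> Sperm E (V - A)"
proof -
  have p: "\<pi> permutes V" and e: "\<forall>x\<in>V. \<pi> x = x \<or> E x (\<pi> x)" and im: "\<pi> ` A = A"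
    using assms by (auto simp: InvEv_def Sperm_def)
  have inj: "inj \<pi>" using p by (rule permutes_inj)
  have imV: "\<pi> ` V = V" using p by (rule permutes_image)
  have imB: "\<pi> ` (V - A) = V - A" using inj imV im by (simp add: image_set_diff)
  have "bij_betw \<pi> A A" unfolding bij_betw_def using im inj inj_on_subset by blast
  then have "bij_betw (rA A \<pi>) A A" by (rule bij_betw_cong[THEN iffD1, rotated]) (simp add: rA_def)
  then have "rA A \<pi> permutes A"
    by (rule bij_imp_permutes) (simp add: rA_def)
  then show "rA A \<pi> \<in> Sperm E A" using e AV by (auto simp: Sperm_def rA_def)
  have "bij_betw \<pi> (V - A) (V - A)" unfolding bij_betw_def using imB inj inj_on_subset by blast
  then have "bij_betw (rB A \<pi>) (V - A) (V - A)" by (rule bij_betw_cong[THEN iffD1, rotated]) (simp add: rB_def)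
  then have "rB A \<pi> permutes (V - A)"
    by (rule bij_imp_permutes) (auto simp: rB_def permutes_not_in[OF p])
  then show "rB A \<pi> \<in> Sperm E (V - A)" using e AV by (auto simp: Sperm_def rB_def)
qed

lemma comp_restr:
  assumes "\<pi> \<in> InvEv E V A"
  shows "rA A \<pi> \<circ> rB A \<pi> = \<pi>"
proof
  fix x
  have p: "\<pi> permutes V" and im: "\<pi> ` A = A"
    using assms by (auto simp: InvEv_def Sperm_def)
  have inj: "inj \<pi>" using p by (rule permutes_inj)
  show "(rA A \<pi> \<circ> rB A \<pi>) x = \<pi> x"
  proof (cases "x \<in> A")
    case False
    have "\<pi> x \<notin> A"
    proof
      assume "\<pi> x \<in> A"
      then obtain y where "y \<in> A" "\<pi> x = \<pi> y" using im by (metis imageE)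
      then show False using inj False by (metis injD)
    qed
    then show ?thesis using False by (simp add: rA_def rB_def)
  qed (simp add: rA_def rB_def)
qed

lemma restr_comp:
  assumes s: "\<sigma> \<in> Sperm E A" and t: "\<tau> \<in> Sperm E (V - A)"
  shows "rA A (\<sigma> \<circ> \<tau>) = \<sigma>" "rB A (\<sigma> \<circ> \<tau>) = \<tau>"
proof -
  show "rA A (\<sigma> \<circ> \<tau>) = \<sigma>"
    by (rule ext) (auto simp: rA_def tau_fixA[OF t] sigma_fix[OF s])
  show "rB A (\<sigma> \<circ> \<tau>) = \<tau>"
    by (rule ext) (auto simp: rB_def tau_fixA[OF t] sigma_fix[OF s tau_out[OF t]])
qed

lemma sum_I:
  "sum F (InvEv E V A) = (\<Sum>\<sigma>\<in>Sperm E A. \<Sum>\<tau>\<in>Sperm E (V - A). F (\<sigma> \<circ> \<tau>))"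
proof -
  have "sum F (InvEv E V A) = (\<Sum>p\<in>Sperm E A \<times> Sperm E (V - A). F (fst p \<circ> snd p))"
    by (rule sum.reindex_bij_witness[where i = "\<lambda>p. fst p \<circ> snd p" and j = "\<lambda>\<pi>. (rA A \<pi>, rB A \<pi>)"])
       (auto simp: comp_restr restr_in restr_comp comp_in)
  also have "\<dots> = (\<Sum>\<sigma>\<in>Sperm E A. \<Sum>\<tau>\<in>Sperm E (V - A). F (\<sigma> \<circ> \<tau>))"
    by (simp add: sum.cartesian_product split_def)
  finally show ?thesis .
qed

lemma Ham_comp:
  assumes s: "\<sigma> \<in> Sperm E A" and t: "\<tau> \<in> Sperm E (V - A)"
  shows "Ham V (\<sigma> \<circ> \<tau>) = Ham A \<sigma> + Ham (V - A) \<tau>"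
proof -
  have "{x\<in>V. (\<sigma> \<circ> \<tau>) x \<noteq> x} = {x\<in>A. \<sigma> x \<noteq> x} \<union> {x\<in>V - A. \<tau> x \<noteq> x}"
    using AV by (auto simp: tau_fixA[OF t] sigma_fix[OF s] sigma_fix[OF s tau_out[OF t]])
  moreover have "finite A" using finV AV finite_subset by blast
  ultimately show ?thesis unfolding Ham_def
    using finV by (subst card_Un_disjoint[symmetric]) auto
qed

lemma agree_A:
  assumes s: "\<sigma> \<in> Sperm E A" and t: "\<tau> \<in> Sperm E (V - A)" and x: "x \<in> A"
  shows "(\<sigma> \<circ> \<tau>) x = \<sigma> x \<and> inv (\<sigma> \<circ> \<tau>) x = inv \<sigma> x"
proof
  show "(\<sigma> \<circ> \<tau>) x = \<sigma> x" using tau_fixA[OF t x] by simp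
  have sp: "\<sigma> permutes A" using s by (simp add: Sperm_def)
  have pp: "\<sigma> \<circ> \<tau> permutes V" using comp_in[OF s t] by (simp add: InvEv_def Sperm_def)
  have "inv \<sigma> x \<in> A" using permutes_inv[OF sp] x by (simp add: permutes_in_image)
  then have "(\<sigma> \<circ> \<tau>) (inv \<sigma> x) = x" using tau_fixA[OF t] permutes_inverses(1)[OF sp] by simp
  then show "inv (\<sigma> \<circ> \<tau>) x = inv \<sigma> x" using permutes_inj[OF pp] by (metis inv_f_f)
qed

lemma agree_B:
  assumes s: "\<sigma> \<in> Sperm E A" and t: "\<tau> \<in> Sperm E (V - A)" and x: "x \<in> V - A"
  shows "(\<sigma> \<circ> \<tau>) x = \<tau> x \<and> inv (\<sigma> \<circ> \<tau>) x = inv \<tau> x"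
proof
  have xA: "x \<notin> A" using x by simp
  show "(\<sigma> \<circ> \<tau>) x = \<tau> x" using sigma_fix[OF s tau_out[OF t xA]] by simp
  have tp: "\<tau> permutes (V - A)" using t by (simp add: Sperm_def)
  have pp: "\<sigma> \<circ> \<tau> permutes V" using comp_in[OF s t] by (simp add: InvEv_def Sperm_def)
  have "(\<sigma> \<circ> \<tau>) (inv \<tau> x) = x" using sigma_fix[OF s xA] permutes_inverses(1)[OF tp] by simp
  then show "inv (\<sigma> \<circ> \<tau>) x = inv \<tau> x" using permutes_inj[OF pp] by (metis inv_f_f)
qed

lemma measA:
  assumes "Fmeas E V A f" "\<sigma> \<in> Sperm E A" "\<tau> \<in> Sperm E (V - A)"
  shows "f (\<sigma> \<circ> \<tau>) = f \<sigma>"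
proof -
  have "\<sigma> \<circ> \<tau> \<in> Sperm E V" using comp_in assms by (simp add: InvEv_def)
  moreover have "\<sigma> \<in> Sperm E V" using Sperm_mono[OF AV] assms by blast
  ultimately show ?thesis using assms agree_A unfolding Fmeas_def by blast
qed

lemma measB:
  assumes "Fmeas E V (V - A) g" "\<sigma> \<in> Sperm E A" "\<tau> \<in> Sperm E (V - A)"
  shows "g (\<sigma> \<circ> \<tau>) = g \<tau>"
proof -
  have "\<sigma> \<circ> \<tau> \<in> Sperm E V" using comp_in assms by (simp add: InvEv_def)
  moreover have "\<tau> \<in> Sperm E V" using Sperm_mono[of "V - A" V] assms by blast
  ultimately show ?thesis using assms agree_B unfolding Fmeas_def by blast
qed


lemma sum_prod_I:
  assumes "\<And>\<sigma> \<tau>. \<sigma> \<in> Sperm E A \<Longrightarrow> \<tau> \<in> Sperm E (V - A) \<Longrightarrow> F (\<sigma> \<circ> \<tau>) = a \<sigma> * b \<tau>"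
  shows "(\<Sum>\<pi>\<in>InvEv E V A. F \<pi> * exp (- \<alpha> * real (Ham V \<pi>)))
    = (\<Sum>\<sigma>\<in>Sperm E A. a \<sigma> * exp (- \<alpha> * real (Ham A \<sigma>)))
      * (\<Sum>\<tau>\<in>Sperm E (V - A). b \<tau> * exp (- \<alpha> * real (Ham (V - A) \<tau>)))"
proof -
  have "(\<Sum>\<pi>\<in>InvEv E V A. F \<pi> * exp (- \<alpha> * real (Ham V \<pi>)))
    = (\<Sum>\<sigma>\<in>Sperm E A. \<Sum>\<tau>\<in>Sperm E (V - A). (a \<sigma> * exp (- \<alpha> * real (Ham A \<sigma>)))
         * (b \<tau> * exp (- \<alpha> * real (Ham (V - A) \<tau>))))"
    unfolding sum_I
  proof (intro sum.cong refl)
    fix \<sigma> \<tau> assume s: "\<sigma> \<in> Sperm E A" and t: "\<tau> \<in> Sperm E (V - A)"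
    have "exp (- \<alpha> * real (Ham V (\<sigma> \<circ> \<tau>))) = exp (- \<alpha> * real (Ham A \<sigma>)) * exp (- \<alpha> * real (Ham (V - A) \<tau>))"
      by (simp add: Ham_comp[OF s t] distrib_left exp_add[symmetric])
    then show "F (\<sigma> \<circ> \<tau>) * exp (- \<alpha> * real (Ham V (\<sigma> \<circ> \<tau>))) = (a \<sigma> * exp (- \<alpha> * real (Ham A \<sigma>)))
         * (b \<tau> * exp (- \<alpha> * real (Ham (V - A) \<tau>)))"
      using assms[OF s t] by simp
  qed
  then show ?thesis by (simp add: sum_product)
qed

lemma InvEv_sub: "InvEv E V A \<subseteq> Sperm E V" by (auto simp: InvEv_def)

end

lemma Expect_C:
  assumes "C \<subseteq> Sperm E V" and fin: "finite V"
  shows "Expect E \<alpha> V (\<lambda>\<pi>. F \<pi> * of_bool (\<pi> \<in> C)) = (\<Sum>\<pi>\<in>C. F \<pi> * exp (- \<alpha> * real (Ham V \<pi>))) / Zpart E \<alpha> V"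
proof -
  have "Expect E \<alpha> V (\<lambda>\<pi>. F \<pi> * of_bool (\<pi> \<in> C))
     = (\<Sum>\<pi>\<in>Sperm E V. if \<pi> \<in> C then F \<pi> * exp (- \<alpha> * real (Ham V \<pi>)) / Zpart E \<alpha> V else 0)"
    unfolding Expect_def Prob_def by (intro sum.cong) auto
  also have "\<dots> = (\<Sum>\<pi>\<in>Sperm E V \<inter> C. F \<pi> * exp (- \<alpha> * real (Ham V \<pi>)) / Zpart E \<alpha> V)"
    by (simp only: sum.inter_restrict[OF fin_Sperm[OF fin]])
  also have "Sperm E V \<inter> C = C" using assms by blast
  finally show ?thesis by (simp add: sum_divide_distrib)
qed

lemma ProbEv_C:
  assumes "C \<subseteq> Sperm E V" and fin: "finite V"
  shows "ProbEv E \<alpha> V C = (\<Sum>\<pi>\<in>C. exp (- \<alpha> * real (Ham V \<pi>))) / Zpart E \<alpha> V"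
  using Expect_C[OF assms, of \<alpha> "\<lambda>_. 1"] by (simp add: ProbEv_def)

lemma Expect_U:
  "Expect E \<alpha> U f = (\<Sum>\<sigma>\<in>Sperm E U. f \<sigma> * exp (- \<alpha> * real (Ham U \<sigma>))) / Zpart E \<alpha> U"
  unfolding Expect_def Prob_def by (simp add: sum_divide_distrib)

theorem proposition4p1:
  fixes V A :: "'a set" and E :: "'a \<Rightarrow> 'a \<Rightarrow> bool" and \<alpha> :: real
  assumes "graph V E" and "A \<subseteq> V" and "A \<noteq> {}"
  shows "ProbEv E \<alpha> V (InvEv E V A) = Zpart E \<alpha> A * Zpart E \<alpha> (V - A) / Zpart E \<alpha> V
    \<and> (\<forall>f. Fmeas E V A f \<longrightarrow>
           CondExpect E \<alpha> V f (InvEv E V A) = Expect E \<alpha> A f)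
    \<and> (\<forall>f g. Fmeas E V A f \<longrightarrow> Fmeas E V (V - A) g \<longrightarrow>
           CondExpect E \<alpha> V (\<lambda>\<pi>. f \<pi> * g \<pi>) (InvEv E V A)
             = CondExpect E \<alpha> V f (InvEv E V A) * CondExpect E \<alpha> V g (InvEv E V A)
         \<and> CondExpect E \<alpha> V f (InvEv E V A) * CondExpect E \<alpha> V g (InvEv E V A)
             = Expect E \<alpha> A f * Expect E \<alpha> (V - A) g)
    \<and> (\<forall>f B. Fmeas E V A f \<longrightarrow> Fevent E V (V - A) B \<longrightarrow>
           ProbEv E \<alpha> V (InvEv E V A \<inter> B) > 0 \<longrightarrow>
           CondExpect E \<alpha> V f (InvEv E V A \<inter> B) = Expect E \<alpha> A f)"
proof -
  note G = assms(1) and AV = assms(2)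
  have fin: "finite V" using finV[OF G AV] .
  have finA: "finite A" using fin AV finite_subset by blast
  have finB: "finite (V - A)" using fin by simp
  define w where "w U \<pi> = exp (- \<alpha> * real (Ham U \<pi>))" for U and \<pi> :: "'a \<Rightarrow> 'a"
  define ZA where "ZA = Zpart E \<alpha> A"
  define ZB where "ZB = Zpart E \<alpha> (V - A)"
  define ZV where "ZV = Zpart E \<alpha> V"
  have ZA: "ZA > 0" unfolding ZA_def using Zpos[OF finA] .
  have ZB: "ZB > 0" unfolding ZB_def using Zpos[OF finB] .
  have ZV: "ZV > 0" unfolding ZV_def using Zpos[OF fin] .
  have ZAs: "ZA = (\<Sum>\<sigma>\<in>Sperm E A. 1 * w A \<sigma>)" by (simp add: ZA_def Zpart_def w_def)
  have ZBs: "ZB = (\<Sum>\<sigma>\<in>Sperm E (V - A). 1 * w (V - A) \<sigma>)" by (simp add: ZB_def Zpart_def w_def)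
  have SP: "(\<Sum>\<pi>\<in>InvEv E V A. F \<pi> * w V \<pi>) = (\<Sum>\<sigma>\<in>Sperm E A. a \<sigma> * w A \<sigma>) * (\<Sum>\<tau>\<in>Sperm E (V - A). b \<tau> * w (V - A) \<tau>)"
    if "\<And>\<sigma> \<tau>. \<sigma> \<in> Sperm E A \<Longrightarrow> \<tau> \<in> Sperm E (V - A) \<Longrightarrow> F (\<sigma> \<circ> \<tau>) = a \<sigma> * b \<tau>"
    for F a b
    unfolding w_def by (rule sum_prod_I[where F = F and a = a and b = b, OF G AV that])
  have EC: "Expect E \<alpha> V (\<lambda>\<pi>. F \<pi> * of_bool (\<pi> \<in> InvEv E V A)) = (\<Sum>\<pi>\<in>InvEv E V A. F \<pi> * w V \<pi>) / ZV" for F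
    unfolding w_def ZV_def by (rule Expect_C[OF InvEv_sub[OF G AV] fin])
  have EU: "Expect E \<alpha> U f = (\<Sum>\<sigma>\<in>Sperm E U. f \<sigma> * w U \<sigma>) / Zpart E \<alpha> U" for U f
    unfolding w_def by (rule Expect_U)
  have P1: "ProbEv E \<alpha> V (InvEv E V A) = ZA * ZB / ZV"
  proof -
    have "ProbEv E \<alpha> V (InvEv E V A) = (\<Sum>\<pi>\<in>InvEv E V A. 1 * w V \<pi>) / ZV"
      unfolding w_def ZV_def using ProbEv_C[OF InvEv_sub[OF G AV] fin] by simp
    also have "\<dots> = ZA * ZB / ZV" by (subst SP[where a = "\<lambda>_. 1" and b = "\<lambda>_. 1"]) (auto simp: ZAs ZBs)
    finally show ?thesis .
  qed
  have CA: "CondExpect E \<alpha> V f (InvEv E V A) = Expect E \<alpha> A f" if mf: "Fmeas E V A f" for f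
  proof -
    have "(\<Sum>\<pi>\<in>InvEv E V A. f \<pi> * w V \<pi>) = (\<Sum>\<sigma>\<in>Sperm E A. f \<sigma> * w A \<sigma>) * ZB"
      by (subst SP[where a = f and b = "\<lambda>_. 1"]) (auto simp: ZBs measA[OF G AV mf])
    then show ?thesis unfolding CondExpect_def EC P1 EU[of A] using ZA ZB ZV
      by (simp add: ZA_def field_simps)
  qed
  have CB: "CondExpect E \<alpha> V g (InvEv E V A) = Expect E \<alpha> (V - A) g" if mg: "Fmeas E V (V - A) g" for g
  proof -
    have "(\<Sum>\<pi>\<in>InvEv E V A. g \<pi> * w V \<pi>) = ZA * (\<Sum>\<sigma>\<in>Sperm E (V - A). g \<sigma> * w (V - A) \<sigma>)"
      by (subst SP[where a = "\<lambda>_. 1" and b = g]) (auto simp: ZAs measB[OF G AV mg])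
    then show ?thesis unfolding CondExpect_def EC P1 EU[of "V - A"] using ZA ZB ZV
      by (simp add: ZB_def field_simps)
  qed
  have CAB: "CondExpect E \<alpha> V (\<lambda>\<pi>. f \<pi> * g \<pi>) (InvEv E V A) = Expect E \<alpha> A f * Expect E \<alpha> (V - A) g"
    if mf: "Fmeas E V A f" and mg: "Fmeas E V (V - A) g" for f g
  proof -
    have "(\<Sum>\<pi>\<in>InvEv E V A. f \<pi> * g \<pi> * w V \<pi>) = (\<Sum>\<sigma>\<in>Sperm E A. f \<sigma> * w A \<sigma>) * (\<Sum>\<sigma>\<in>Sperm E (V - A). g \<sigma> * w (V - A) \<sigma>)"
      by (subst SP[where a = f and b = g]) (auto simp: measA[OF G AV mf] measB[OF G AV mg])
    then show ?thesis unfolding CondExpect_def EC P1 EU[of "V - A"] EU[of A] using ZA ZB ZV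
      by (simp add: ZA_def ZB_def field_simps)
  qed
  have C4: "CondExpect E \<alpha> V f (InvEv E V A \<inter> B) = Expect E \<alpha> A f"
    if mf: "Fmeas E V A f" and B: "Fevent E V (V - A) B" and pos: "ProbEv E \<alpha> V (InvEv E V A \<inter> B) > 0" for f B
  proof -
    have mB: "Fmeas E V (V - A) (\<lambda>\<pi>. \<pi> \<in> B)" using B by (simp add: Fevent_def)
    have sub: "InvEv E V A \<inter> B \<subseteq> Sperm E V" using InvEv_sub[OF G AV] by blast
    define Bs where "Bs = (\<Sum>\<tau>\<in>Sperm E (V - A). of_bool (\<tau> \<in> B) * w (V - A) \<tau>)"
    have finI: "finite (InvEv E V A)" using fin_Sperm[OF fin] InvEv_sub[OF G AV] finite_subset by blast
    have restr: "(\<Sum>\<pi>\<in>InvEv E V A \<inter> B. F \<pi>) = (\<Sum>\<pi>\<in>InvEv E V A. of_bool (\<pi> \<in> B) * F \<pi>)" for F :: "_ \<Rightarrow> real"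
      by (simp add: sum.inter_restrict[OF finI]) (rule sum.cong, auto)
    have P: "ProbEv E \<alpha> V (InvEv E V A \<inter> B) = ZA * Bs / ZV"
    proof -
      have "ProbEv E \<alpha> V (InvEv E V A \<inter> B) = (\<Sum>\<pi>\<in>InvEv E V A. (of_bool (\<pi> \<in> B)) * w V \<pi>) / ZV"
        unfolding w_def ZV_def using ProbEv_C[OF sub fin] restr by simp
      also have "\<dots> = ZA * Bs / ZV" unfolding Bs_def
        by (subst SP[where a = "\<lambda>_. 1" and b = "\<lambda>\<tau>. of_bool (\<tau> \<in> B)"])
           (auto simp: ZAs measB[OF G AV mB])
      finally show ?thesis .
    qed
    have Bs0: "Bs \<noteq> 0" using pos P by auto
    have "Expect E \<alpha> V (\<lambda>\<pi>. f \<pi> * of_bool (\<pi> \<in> InvEv E V A \<inter> B)) = (\<Sum>\<pi>\<in>InvEv E V A. (f \<pi> * of_bool (\<pi> \<in> B)) * w V \<pi>) / ZV"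
      unfolding w_def ZV_def using Expect_C[OF sub fin] restr by (simp add: mult_ac)
    also have "\<dots> = (\<Sum>\<sigma>\<in>Sperm E A. f \<sigma> * w A \<sigma>) * Bs / ZV" unfolding Bs_def
      by (subst SP[where a = f and b = "\<lambda>\<tau>. of_bool (\<tau> \<in> B)"])
         (auto simp: measA[OF G AV mf] measB[OF G AV mB])
    finally show ?thesis unfolding CondExpect_def P EU[of A] using ZA ZV Bs0
      by (simp add: ZA_def field_simps)
  qed
  show ?thesis using P1 CA CB CAB C4 by (simp add: ZA_def ZB_def ZV_def)
qed

end
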